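(* Consider line-point incidence pairs $(\ell,p)$, where $\ell$ is a non-vertical line in $\mathbb{R}^2$ and $p\in\ell$; such a pair is parametrized by the triple $(a,b,\kappa)\in\mathbb{R}^3$, where $p=(a,b)$ and $\kappa$ is the slope of $\ell$. For such a pair with parameters $(a,b,\kappa)$, let $\sigma_{\ell,p}\subset\mathbb{R}^3$ be the set of points $(x,y,w)\in\mathbb{R}^3$ satisfying $$\bigl(y-b-\kappa(x-a)\bigr)\bigl(y-b-w(x-a)\bigr)=2(w-\kappa)\quad\text{and}\quad w\neq\kappa.$$ Let $(\ell_1,p_1)$ and $(\ell_2,p_2)$ be two distinct such incidence pairs, let $\gamma=\sigma_{\ell_1,p_1}\cap\sigma_{\ell_2,p_2}$, and assume $\gamma$ is non-empty. If $(\ell,p)$ is an incidence pair (of the same kind) with $\sigma_{\ell,p}\supseteq\gamma$, then $(\ell,p)=(\ell_1,p_1)$ or $(\ell,p)=(\ell_2,p_2)$.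
   Context: The surface $\sigma_{\ell,p}$ is the locus of parameter triples $(x,y,w)$ of pairs $(\ell',p')$ ($p'=(x,y)$, $\ell'$ of slope $w$ through $p'$) such that the triangle with vertices $p$, $p'$, $\ell\cap\ell'$ has area $1$ with $\vec{op'}$ counterclockwise to $\vec{op}$, where $o=\ell\cap\ell'$. *)

theory Defs
  imports Main Complex_Main
begin

definition sigma :: "real \<times> real \<times> real \<Rightarrow> (real \<times> real \<times> real) set" where
  "sigma q = (case q of (a, b, k) \<Rightarrow>
     {(x, y, w). (y - b - k * (x - a)) * (y - b - w * (x - a)) = 2 * (w - k) \<and> w \<noteq> k})"

end

theory Submission
  imports Defs "HOL-Computational_Algebra.Polynomial"
begin


definition gpt :: "real \<Rightarrow> real \<Rightarrow> real \<Rightarrow> real \<Rightarrow> real \<Rightarrow> real \<times> real \<times> real" where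
  "gpt a1 b1 k1 m t = (a1 + (2/(m*t) - m), b1 + k1*(2/(m*t) - m) + 2/m, k1 + t)"

definition Qf :: "real \<Rightarrow> real \<Rightarrow> real \<Rightarrow> real \<Rightarrow> real \<Rightarrow> real" where
  "Qf d dl e m t = (2*d - m*(m+d)*(e + (m+d)*dl))*t^2 + (2*dl*d - 2*e + m*e*(e+(m+d)*dl))*t - 2*dl*e"

lemma key_id:
  assumes "m \<noteq> 0" "t \<noteq> 0"
  shows "m*t*(((b1 + k1*(2/(m*t) - m) + 2/m) - b - k*((a1 + (2/(m*t) - m)) - a)) *
     ((b1 + k1*(2/(m*t) - m) + 2/m) - b - (k1+t)*((a1 + (2/(m*t) - m)) - a)) - 2*((k1+t) - k))
   = Qf (a - a1) (k1 - k) (b - b1 - k1*(a - a1)) m t"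
  using assms unfolding Qf_def by (simp add: field_simps power2_eq_square)

lemma mem_iff:
  assumes "m \<noteq> 0" "t \<noteq> 0"
  shows "gpt a1 b1 k1 m t \<in> sigma (a,b,k) \<longleftrightarrow>
     Qf (a - a1) (k1 - k) (b - b1 - k1*(a - a1)) m t = 0 \<and> k1 + t \<noteq> k"
proof -
  have "gpt a1 b1 k1 m t \<in> sigma (a,b,k) \<longleftrightarrow>
    (((b1 + k1*(2/(m*t) - m) + 2/m) - b - k*((a1 + (2/(m*t) - m)) - a)) *
     ((b1 + k1*(2/(m*t) - m) + 2/m) - b - (k1+t)*((a1 + (2/(m*t) - m)) - a)) - 2*((k1+t) - k)) = 0
     \<and> k1 + t \<noteq> k"
    unfolding gpt_def sigma_def by auto
  also have "\<dots> \<longleftrightarrow> Qf (a - a1) (k1 - k) (b - b1 - k1*(a - a1)) m t = 0 \<and> k1 + t \<noteq> k"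
    using key_id[OF assms, of b1 k1 b k a1 a, symmetric] assms by auto
  finally show ?thesis .
qed



lemma poly_ev_nz:
  fixes p :: "real poly"
  assumes "p \<noteq> 0"
  shows "\<exists>M. \<forall>x\<ge>M. poly p x \<noteq> 0"
proof -
  let ?S = "{x. poly p x = 0}"
  have fin: "finite ?S" using poly_roots_finite[OF assms] .
  define B where "B = Max (insert 0 ?S)"
  have "\<forall>x\<in>?S. x \<le> B" unfolding B_def using fin by auto
  then show ?thesis by (intro exI[of _ "B+1"]) force
qed

lemma quint_poly: "poly [:c0,c1,c2,c3,c4,c5:] x = c0 + c1*x + c2*x^2 + c3*x^3 + c4*x^4 + (c5::real)*x^5"
  by (simp add: algebra_simps power_numeral_reduce)

lemma quint_ev_nz:
  assumes "\<not>(c0 = 0 \<and> c1 = 0 \<and> c2 = 0 \<and> c3 = 0 \<and> c4 = 0 \<and> c5 = 0)"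
  shows "\<exists>M. \<forall>x\<ge>M. c0 + c1*x + c2*x^2 + c3*x^3 + c4*x^4 + (c5::real)*x^5 \<noteq> 0"
proof -
  have "[:c0,c1,c2,c3,c4,c5:] \<noteq> 0" using assms by auto
  from poly_ev_nz[OF this] show ?thesis unfolding quint_poly .
qed

lemma quint_zero:
  assumes "\<forall>x\<ge>M. c0 + c1*x + c2*x^2 + c3*x^3 + c4*x^4 + (c5::real)*x^5 = 0"
  shows "c0 = 0 \<and> c1 = 0 \<and> c2 = 0 \<and> c3 = 0 \<and> c4 = 0 \<and> c5 = 0"
proof (rule ccontr)
  assume "\<not> ?thesis"
  from quint_ev_nz[OF this] obtain M' where "\<forall>x\<ge>M'. c0 + c1*x + c2*x^2 + c3*x^3 + c4*x^4 + c5*x^5 \<noteq> 0" by blast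
  with assms show False by (metis max.cobounded1 max.cobounded2)
qed

lemma quart_ev_pos:
  assumes "(c4::real) > 0"
  shows "\<exists>M. \<forall>x\<ge>M. c0 + c1*x + c2*x^2 + c3*x^3 + c4*x^4 > 0"
proof -
  have lc: "lead_coeff [:c0,c1,c2,c3,c4:] = c4" using assms by simp
  from poly_pinfty_gt_lc[of "[:c0,c1,c2,c3,c4:]"] assms lc obtain n where
    "\<forall>x\<ge>n. poly [:c0,c1,c2,c3,c4:] x \<ge> c4" by auto
  moreover have "poly [:c0,c1,c2,c3,c4:] x = c0 + c1*x + c2*x^2 + c3*x^3 + c4*x^4" for x
    by (simp add: algebra_simps power_numeral_reduce)
  ultimately show ?thesis using assms by (metis less_le_trans)
qed



lemma quad_two_roots:
  fixes A B C :: real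
  assumes "A \<noteq> 0" "B^2 - 4*A*C > 0"
  shows "\<exists>t1 t2. t1 \<noteq> t2 \<and> A*t1^2 + B*t1 + C = 0 \<and> A*t2^2 + B*t2 + C = 0"
proof -
  define s where "s = sqrt (B^2 - 4*A*C)"
  have s2: "s^2 = B^2 - 4*A*C" unfolding s_def using assms by simp
  have sp: "s > 0" unfolding s_def using assms by simp
  define t1 where "t1 = (-B + s)/(2*A)"
  define t2 where "t2 = (-B - s)/(2*A)"
  have r: "A*t^2 + B*t + C = 0" if "2*A*t + B = s \<or> 2*A*t + B = -s" for t
  proof -
    have "(2*A*t + B)^2 = s^2" using that by auto
    then have "4*A*(A*t^2 + B*t + C) = 0" using s2 by (simp add: algebra_simps power2_eq_square)
    then show ?thesis using assms by simp
  qed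
  have "2*A*t1 + B = s" "2*A*t2 + B = -s" unfolding t1_def t2_def using assms by (simp_all add: field_simps)
  moreover have "t1 \<noteq> t2" unfolding t1_def t2_def using assms sp by (simp add: field_simps)
  ultimately show ?thesis using r by blast
qed

lemma lin_two_zero:
  fixes a b t1 t2 :: real
  assumes "a*t1 + b = 0" "a*t2 + b = 0" "t1 \<noteq> t2"
  shows "a = 0 \<and> b = 0"
proof -
  have "a*t1 - a*t2 = 0" using assms(1,2) by linarith
  then have "a*(t1 - t2) = 0" by (simp add: right_diff_distrib)
  then have "a = 0 \<or> t1 - t2 = 0" by simp
  then have "a = 0" using assms(3) by simp
  then show ?thesis using assms by simp
qed

lemma main_abs:
  fixes d dl e d2 dl2 e2 :: real
  assumes dl2: "dl2 \<noteq> 0" and e2: "e2 \<noteq> 0"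
    and H: "\<And>m t. m \<noteq> 0 \<Longrightarrow> t \<noteq> 0 \<Longrightarrow> Qf d2 dl2 e2 m t = 0 \<Longrightarrow> t \<noteq> -dl2 \<Longrightarrow> Qf d dl e m t = 0"
  shows "(d = 0 \<and> dl = 0 \<and> e = 0) \<or> (d = d2 \<and> dl = dl2 \<and> e = e2)"
proof -
  define A2 where "A2 m = 2*d2 - m*(m+d2)*(e2+(m+d2)*dl2)" for m
  define B2 where "B2 m = 2*dl2*d2 - 2*e2 + m*e2*(e2+(m+d2)*dl2)" for m
  define C2 where "C2 = -2*dl2*e2"
  define Aq where "Aq m = 2*d - m*(m+d)*(e+(m+d)*dl)" for m
  define Bq where "Bq m = 2*dl*d - 2*e + m*e*(e+(m+d)*dl)" for m
  define Cq where "Cq = -2*dl*e"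
  have Q2: "Qf d2 dl2 e2 m t = A2 m * t^2 + B2 m * t + C2" for m t
    unfolding Qf_def A2_def B2_def C2_def by simp
  have Qq: "Qf d dl e m t = Aq m * t^2 + Bq m * t + Cq" for m t
    unfolding Qf_def Aq_def Bq_def Cq_def by simp
  have C2nz: "C2 \<noteq> 0" unfolding C2_def using dl2 e2 by simp
  have pos: "e2^2*dl2^2 > 0" using dl2 e2 by simp
  obtain M1 where M1: "\<forall>x\<ge>M1. ((4)*d2^2*dl2^2 + (8)*d2*e2*dl2 + (4)*e2^2) + ((-4)*d2^2*e2*dl2^2 + (-8)*d2*e2^2*dl2 + (-4)*e2^3)*x + ((1)*d2^2*e2^2*dl2^2 + (2)*d2*e2^3*dl2 + (-12)*d2*e2*dl2^2 + (1)*e2^4 + (-12)*e2^2*dl2)*x^2 + ((2)*d2*e2^2*dl2^2 + (2)*e2^3*dl2 + (-8)*e2*dl2^2)*x^3 + (e2^2*dl2^2)*x^4 > 0"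
    using quart_ev_pos[OF pos] by blast
  have disc: "B2 m ^2 - 4*A2 m*C2 = ((4)*d2^2*dl2^2 + (8)*d2*e2*dl2 + (4)*e2^2) + ((-4)*d2^2*e2*dl2^2 + (-8)*d2*e2^2*dl2 + (-4)*e2^3)*m + ((1)*d2^2*e2^2*dl2^2 + (2)*d2*e2^3*dl2 + (-12)*d2*e2*dl2^2 + (1)*e2^4 + (-12)*e2^2*dl2)*m^2 + ((2)*d2*e2^2*dl2^2 + (2)*e2^3*dl2 + (-8)*e2*dl2^2)*m^3 + (e2^2*dl2^2)*m^4" for m
    unfolding A2_def B2_def C2_def by algebra
  obtain M2 where M2: "\<forall>x\<ge>M2. (2*d2) + (- (d2^2*dl2) - d2*e2)*x + (-2*d2*dl2 - e2)*x^2 + (-dl2)*x^3 + 0*x^4 + 0*x^5 \<noteq> 0"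
    using quint_ev_nz[of "2*d2" "- (d2^2*dl2) - d2*e2" "-2*d2*dl2 - e2" "-dl2" 0 0] dl2 by auto
  have A2e: "A2 m = (2*d2) + (- (d2^2*dl2) - d2*e2)*m + (-2*d2*dl2 - e2)*m^2 + (-dl2)*m^3 + 0*m^4 + 0*m^5" for m
    unfolding A2_def by algebra
  obtain M3 where M3: "\<forall>x\<ge>M3. (e2 + d2*dl2) + dl2*x + 0*x^2 + 0*x^3 + 0*x^4 + 0*x^5 \<noteq> 0"
    using quint_ev_nz[of "e2 + d2*dl2" "dl2" 0 0 0 0] dl2 by auto
  define M where "M = max (max M1 M2) (max M3 1)"
  have AB: "C2 * Aq m - Cq * A2 m = 0 \<and> C2 * Bq m - Cq * B2 m = 0" if mM: "m \<ge> M" for m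
  proof -
    have m0: "m \<noteq> 0" using mM unfolding M_def by auto
    have A2nz: "A2 m \<noteq> 0" using M2 mM A2e unfolding M_def by auto
    have E2nz: "e2 + (m+d2)*dl2 \<noteq> 0" using M3 mM unfolding M_def by (auto simp: algebra_simps)
    have dpos: "B2 m ^2 - 4*A2 m*C2 > 0" using M1 mM disc unfolding M_def by auto
    obtain t1 t2 where t12: "t1 \<noteq> t2" "A2 m*t1^2 + B2 m*t1 + C2 = 0" "A2 m*t2^2 + B2 m*t2 + C2 = 0"
      using quad_two_roots[OF A2nz dpos] by blast
    have nd: "Qf d2 dl2 e2 m (-dl2) = -m*dl2*(e2 + (m+d2)*dl2)^2"
      unfolding Qf_def by algebra
    have nd2: "Qf d2 dl2 e2 m (-dl2) \<noteq> 0" using nd m0 dl2 E2nz by simp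
    have good: "t \<noteq> 0 \<and> (C2 * Aq m - Cq * A2 m)*t + (C2 * Bq m - Cq * B2 m) = 0"
      if tr: "A2 m*t^2 + B2 m*t + C2 = 0" for t
    proof -
      have t0: "t \<noteq> 0" using tr C2nz by auto
      have "t \<noteq> -dl2" using nd2 tr Q2 by auto
      then have "Qf d dl e m t = 0" using H[OF m0 t0] tr Q2 by auto
      then have "Aq m * t^2 + Bq m * t + Cq = 0" using Qq by simp
      moreover have "t * ((C2 * Aq m - Cq * A2 m)*t + (C2 * Bq m - Cq * B2 m)) =
          C2 * (Aq m * t^2 + Bq m * t + Cq) - Cq * (A2 m*t^2 + B2 m*t + C2)" by algebra
      ultimately have "t * ((C2 * Aq m - Cq * A2 m)*t + (C2 * Bq m - Cq * B2 m)) = 0"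
        using tr by simp
      then show ?thesis using t0 by simp
    qed
    show ?thesis using good[OF t12(2)] good[OF t12(3)] lin_two_zero t12(1) by blast
  qed
  have al: "\<forall>m\<ge>M. ((-4)*d*e2*dl2 + 4*e*dl*d2) + (2*d^2*dl*e2*dl2 + 2*d*e*e2*dl2 - 2*e*dl*d2^2*dl2 - 2*e*dl*d2*e2)*m + (4*d*dl*e2*dl2 - 4*e*dl*d2*dl2 - 2*e*dl*e2 + 2*e*e2*dl2)*m^2 + (-2*e*dl*dl2 + 2*dl*e2*dl2)*m^3 + (0)*m^4 + (0)*m^5 = 0"
  proof (intro allI impI)
    fix m assume "m \<ge> M"
    have "C2 * Aq m - Cq * A2 m = ((-4)*d*e2*dl2 + 4*e*dl*d2) + (2*d^2*dl*e2*dl2 + 2*d*e*e2*dl2 - 2*e*dl*d2^2*dl2 - 2*e*dl*d2*e2)*m + (4*d*dl*e2*dl2 - 4*e*dl*d2*dl2 - 2*e*dl*e2 + 2*e*e2*dl2)*m^2 + (-2*e*dl*dl2 + 2*dl*e2*dl2)*m^3 + (0)*m^4 + (0)*m^5" unfolding C2_def Cq_def Aq_def A2_def by algebra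
    then show "((-4)*d*e2*dl2 + 4*e*dl*d2) + (2*d^2*dl*e2*dl2 + 2*d*e*e2*dl2 - 2*e*dl*d2^2*dl2 - 2*e*dl*d2*e2)*m + (4*d*dl*e2*dl2 - 4*e*dl*d2*dl2 - 2*e*dl*e2 + 2*e*e2*dl2)*m^2 + (-2*e*dl*dl2 + 2*dl*e2*dl2)*m^3 + (0)*m^4 + (0)*m^5 = 0" using AB[OF \<open>m \<ge> M\<close>] by simp
  qed
  have be: "\<forall>m\<ge>M. (-4*d*dl*e2*dl2 + 4*e*dl*d2*dl2 - 4*e*dl*e2 + 4*e*e2*dl2) + (-2*d*e*dl*e2*dl2 - 2*e^2*e2*dl2 + 2*e*dl*d2*e2*dl2 + 2*e*dl*e2^2)*m + (0)*m^2 + (0)*m^3 + (0)*m^4 + (0)*m^5 = 0"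
  proof (intro allI impI)
    fix m assume "m \<ge> M"
    have "C2 * Bq m - Cq * B2 m = (-4*d*dl*e2*dl2 + 4*e*dl*d2*dl2 - 4*e*dl*e2 + 4*e*e2*dl2) + (-2*d*e*dl*e2*dl2 - 2*e^2*e2*dl2 + 2*e*dl*d2*e2*dl2 + 2*e*dl*e2^2)*m + (0)*m^2 + (0)*m^3 + (0)*m^4 + (0)*m^5" unfolding C2_def Cq_def Bq_def B2_def by algebra
    then show "(-4*d*dl*e2*dl2 + 4*e*dl*d2*dl2 - 4*e*dl*e2 + 4*e*e2*dl2) + (-2*d*e*dl*e2*dl2 - 2*e^2*e2*dl2 + 2*e*dl*d2*e2*dl2 + 2*e*dl*e2^2)*m + (0)*m^2 + (0)*m^3 + (0)*m^4 + (0)*m^5 = 0" using AB[OF \<open>m \<ge> M\<close>] by simp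
  qed
  have a3: "-2*e*dl*dl2 + 2*dl*e2*dl2 = 0" and a2: "4*d*dl*e2*dl2 - 4*e*dl*d2*dl2 - 2*e*dl*e2 + 2*e*e2*dl2 = 0" and a0: "(-4)*d*e2*dl2 + 4*e*dl*d2 = 0"
    using quint_zero[OF al] by auto
  have b1: "-2*d*e*dl*e2*dl2 - 2*e^2*e2*dl2 + 2*e*dl*d2*e2*dl2 + 2*e*dl*e2^2 = 0" using quint_zero[OF be] by auto
  have "dl*(e2 - e) = 0" using a3 dl2 by (simp add: algebra_simps)
  then consider "dl = 0" | "e = e2" by auto
  then show ?thesis
  proof cases
    case 1
    then have "e*e2*dl2 = 0" using a2 by simp
    then have "e = 0" using e2 dl2 by simp
    moreover have "d*e2*dl2 = 0" using a0 1 by simp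
    then have "d = 0" using e2 dl2 by simp
    ultimately show ?thesis using 1 by simp
  next
    case 2
    define X where "X = dl*dl2*(d-d2)"
    define Y where "Y = e2*(dl2 - dl)"
    have "e2*(2*X + Y) = 0" using a2 2 unfolding X_def Y_def by (simp add: algebra_simps)
    then have x1: "2*X + Y = 0" using e2 by simp
    have "e2^2*(-X - Y) = 0" using b1 2 unfolding X_def Y_def by (simp add: algebra_simps power2_eq_square)
    then have x2: "-X - Y = 0" using e2 by simp
    have "X = 0" using x1 x2 by linarith
    then have "Y = 0" using x1 by simp
    then have "dl = dl2" using e2 unfolding Y_def by simp
    with \<open>X = 0\<close> have "d = d2" using dl2 unfolding X_def by simp
    with 2 \<open>dl = dl2\<close> show ?thesis by simp
  qed
qed

lemma par_abs:
  fixes d dl e d2 e2 :: real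
  assumes e2: "e2 \<noteq> 0"
    and H: "\<And>m t. m \<noteq> 0 \<Longrightarrow> t \<noteq> 0 \<Longrightarrow> Qf d2 0 e2 m t = 0 \<Longrightarrow> Qf d dl e m t = 0"
  shows "(d = 0 \<and> dl = 0 \<and> e = 0) \<or> (d = d2 \<and> dl = 0 \<and> e = e2)"
proof -
  define A2 where "A2 m = 2*d2 - m*(m+d2)*e2" for m
  define B2 where "B2 m = -2*e2 + m*e2^2" for m
  define Aq where "Aq m = 2*d - m*(m+d)*(e+(m+d)*dl)" for m
  define Bq where "Bq m = 2*dl*d - 2*e + m*e*(e+(m+d)*dl)" for m
  define Cq where "Cq = -2*dl*e"
  have Q2: "Qf d2 0 e2 m t = A2 m * t^2 + B2 m * t" for m t
    unfolding Qf_def A2_def B2_def by (simp add: power2_eq_square)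
  have Qq: "Qf d dl e m t = Aq m * t^2 + Bq m * t + Cq" for m t
    unfolding Qf_def Aq_def Bq_def Cq_def by simp
  obtain M2 where M2: "\<forall>x\<ge>M2. (2*d2) + (- (d2*e2))*x + (- e2)*x^2 + 0*x^3 + 0*x^4 + 0*x^5 \<noteq> 0"
    using quint_ev_nz[of "2*d2" "- (d2*e2)" "- e2" 0 0 0] e2 by auto
  have A2e: "A2 m = (2*d2) + (- (d2*e2))*m + (- e2)*m^2 + 0*m^3 + 0*m^4 + 0*m^5" for m
    unfolding A2_def by algebra
  obtain M3 where M3: "\<forall>x\<ge>M3. (-2*e2) + (e2^2)*x + 0*x^2 + 0*x^3 + 0*x^4 + 0*x^5 \<noteq> 0"
    using quint_ev_nz[of "-2*e2" "e2^2" 0 0 0 0] e2 by auto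
  have B2e: "B2 m = (-2*e2) + (e2^2)*m + 0*m^2 + 0*m^3 + 0*m^4 + 0*m^5" for m
    unfolding B2_def by algebra
  define M where "M = max (max M2 M3) 1"
  have PP: "Aq m * B2 m^2 - Bq m * B2 m * A2 m + Cq * A2 m^2 = 0" if mM: "m \<ge> M" for m
  proof -
    have m0: "m \<noteq> 0" using mM unfolding M_def by auto
    have A2nz: "A2 m \<noteq> 0" using M2 mM A2e unfolding M_def by auto
    have B2nz: "B2 m \<noteq> 0" using M3 mM B2e unfolding M_def by auto
    define t where "t = - B2 m / A2 m"
    have At: "A2 m * t = - B2 m" unfolding t_def using A2nz by simp
    have t0: "t \<noteq> 0" unfolding t_def using A2nz B2nz by simp
    have "Qf d2 0 e2 m t = t * (A2 m * t + B2 m)" using Q2 by (simp add: algebra_simps power2_eq_square)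
    then have "Qf d2 0 e2 m t = 0" using At by simp
    then have "Aq m * t^2 + Bq m * t + Cq = 0" using H[OF m0 t0] Qq by simp
    moreover have "Aq m * B2 m^2 - Bq m * B2 m * A2 m + Cq * A2 m^2 = A2 m^2 * (Aq m * t^2 + Bq m * t + Cq)"
      using At by algebra
    ultimately show ?thesis by simp
  qed
  have pz: "\<forall>m\<ge>M. ((8)*d*dl*d2*e2 + (8)*d*e2^2 + (-8)*e*dl*d2^2 + (-8)*e*d2*e2) + ((-4)*d^2*dl*e2^2 + (4)*d*e*dl*d2*e2 + (-4)*d*e*e2^2 + (-8)*d*dl*d2*e2^2 + (-8)*d*e2^3 + (4)*e^2*d2*e2 + (8)*e*dl*d2^2*e2 + (8)*e*d2*e2^2)*m + ((4)*d^2*dl*e2^3 + (-4)*d*e*dl*d2*e2^2 + (4)*d*e*e2^3 + (2)*d*dl*d2*e2^3 + (-12)*d*dl*e2^2 + (2)*d*e2^4 + (-4)*e^2*d2*e2^2 + (-2)*e*dl*d2^2*e2^2 + (12)*e*dl*d2*e2 + (-2)*e*d2*e2^3)*m^2 + ((-1)*d^2*dl*e2^4 + (1)*d*e*dl*d2*e2^3 + (-2)*d*e*dl*e2^2 + (-1)*d*e*e2^4 + (10)*d*dl*e2^3 + (1)*e^2*d2*e2^3 + (-2)*e^2*e2^2 + (-8)*e*dl*d2*e2^2 + (2)*e*e2^3 + (-4)*dl*e2^2)*m^3 + ((1)*d*e*dl*e2^3 + (-2)*d*dl*e2^4 + (1)*e^2*e2^3 + (1)*e*dl*d2*e2^3 +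 (-4)*e*dl*e2^2 + (-1)*e*e2^4 + (4)*dl*e2^3)*m^4 + ((1)*e*dl*e2^3 + (-1)*dl*e2^4)*m^5 = 0"
  proof (intro allI impI)
    fix m assume "m \<ge> M"
    have "Aq m * B2 m^2 - Bq m * B2 m * A2 m + Cq * A2 m^2 = ((8)*d*dl*d2*e2 + (8)*d*e2^2 + (-8)*e*dl*d2^2 + (-8)*e*d2*e2) + ((-4)*d^2*dl*e2^2 + (4)*d*e*dl*d2*e2 + (-4)*d*e*e2^2 + (-8)*d*dl*d2*e2^2 + (-8)*d*e2^3 + (4)*e^2*d2*e2 + (8)*e*dl*d2^2*e2 + (8)*e*d2*e2^2)*m + ((4)*d^2*dl*e2^3 + (-4)*d*e*dl*d2*e2^2 + (4)*d*e*e2^3 + (2)*d*dl*d2*e2^3 + (-12)*d*dl*e2^2 + (2)*d*e2^4 + (-4)*e^2*d2*e2^2 + (-2)*e*dl*d2^2*e2^2 + (12)*e*dl*d2*e2 + (-2)*e*d2*e2^3)*m^2 + ((-1)*d^2*dl*e2^4 + (1)*d*e*dl*d2*e2^3 + (-2)*d*e*dl*e2^2 + (-1)*d*e*e2^4 + (10)*d*dl*e2^3 + (1)*e^2*d2*e2^3 + (-2)*e^2*e2^2 + (-8)*e*dl*d2*e2^2 + (2)*e*e2^3 + (-4)*dl*e2^2)*m^3 + ((1)*d*e*dl*e2^3 + (-2)*d*dl*e2^4 + (1)*e^2*e2^3 + (1)*e*dl*d2*e2^3 + (-4)*e*dl*e2^2 + (-1)*e*e2^4 + (4)*dl*e2^3)*m^4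 + ((1)*e*dl*e2^3 + (-1)*dl*e2^4)*m^5"
      unfolding Aq_def Bq_def Cq_def A2_def B2_def by algebra
    then show "((8)*d*dl*d2*e2 + (8)*d*e2^2 + (-8)*e*dl*d2^2 + (-8)*e*d2*e2) + ((-4)*d^2*dl*e2^2 + (4)*d*e*dl*d2*e2 + (-4)*d*e*e2^2 + (-8)*d*dl*d2*e2^2 + (-8)*d*e2^3 + (4)*e^2*d2*e2 + (8)*e*dl*d2^2*e2 + (8)*e*d2*e2^2)*m + ((4)*d^2*dl*e2^3 + (-4)*d*e*dl*d2*e2^2 + (4)*d*e*e2^3 + (2)*d*dl*d2*e2^3 + (-12)*d*dl*e2^2 + (2)*d*e2^4 + (-4)*e^2*d2*e2^2 + (-2)*e*dl*d2^2*e2^2 + (12)*e*dl*d2*e2 + (-2)*e*d2*e2^3)*m^2 + ((-1)*d^2*dl*e2^4 + (1)*d*e*dl*d2*e2^3 + (-2)*d*e*dl*e2^2 + (-1)*d*e*e2^4 + (10)*d*dl*e2^3 + (1)*e^2*d2*e2^3 + (-2)*e^2*e2^2 + (-8)*e*dl*d2*e2^2 + (2)*e*e2^3 + (-4)*dl*e2^2)*m^3 + ((1)*d*e*dl*e2^3 + (-2)*d*dl*e2^4 + (1)*e^2*e2^3 + (1)*e*dl*d2*e2^3 + (-4)*e*dl*e2^2 + (-1)*e*e2^4 + (4)*dl*e2^3)*m^4 + ((1)*e*dl*e2^3 + (-1)*dl*e2^4)*m^5 = 0" using PP[OF \<open>m \<ge> M\<close>] by simp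
  qed
  have p0: "(8)*d*dl*d2*e2 + (8)*d*e2^2 + (-8)*e*dl*d2^2 + (-8)*e*d2*e2 = 0" and p2: "(4)*d^2*dl*e2^3 + (-4)*d*e*dl*d2*e2^2 + (4)*d*e*e2^3 + (2)*d*dl*d2*e2^3 + (-12)*d*dl*e2^2 + (2)*d*e2^4 + (-4)*e^2*d2*e2^2 + (-2)*e*dl*d2^2*e2^2 + (12)*e*dl*d2*e2 + (-2)*e*d2*e2^3 = 0" and p3: "(-1)*d^2*dl*e2^4 + (1)*d*e*dl*d2*e2^3 + (-2)*d*e*dl*e2^2 + (-1)*d*e*e2^4 + (10)*d*dl*e2^3 + (1)*e^2*d2*e2^3 + (-2)*e^2*e2^2 + (-8)*e*dl*d2*e2^2 + (2)*e*e2^3 + (-4)*dl*e2^2 = 0" and p4: "(1)*d*e*dl*e2^3 + (-2)*d*dl*e2^4 + (1)*e^2*e2^3 + (1)*e*dl*d2*e2^3 + (-4)*e*dl*e2^2 + (-1)*e*e2^4 + (4)*dl*e2^3 = 0" and p5: "(1)*e*dl*e2^3 + (-1)*dl*e2^4 = 0"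
    using quint_zero[OF pz] by auto
  have "dl*e2^3*(e - e2) = 0" using p5 by algebra
  then consider "dl = 0" | "e = e2" using e2 by auto
  then show ?thesis
  proof cases
    case 1
    note dl0 = 1
    have "e*e2^3*(e - e2) = 0" using p4 1 by algebra
    then consider "e = 0" | "e = e2" using e2 by auto
    then show ?thesis
    proof cases
      case 1
      have "d*e2^4 = 0" using p2 1 dl0 by algebra
      then show ?thesis using 1 dl0 e2 by simp
    next
      case 2
      have "e2^2*(d - d2) = 0" using p0 2 dl0 by algebra
      then show ?thesis using 2 dl0 e2 by simp
    qed
  next
    case 2
    show ?thesis
    proof (cases "dl = 0")
      case True
      have "e*e2^3*(e - e2) = 0" using p4 True by algebra
      have "e2^2*(d - d2) = 0" using p0 True 2 by algebra
      then show ?thesis using True 2 e2 by simp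
    next
      case False
      have "dl*e2^4*(d2 - d) = 0" using p4 2 by algebra
      then have "d = d2" using False e2 by simp
      have "dl*e2^2 = 0" using p3 2 \<open>d = d2\<close> by algebra
      then show ?thesis using False e2 by simp
    qed
  qed
qed



lemma in_sigma1:
  assumes "m \<noteq> 0" "t \<noteq> 0"
  shows "gpt a1 b1 k1 m t \<in> sigma (a1,b1,k1)"
  using mem_iff[OF assms, of a1 b1 k1 a1 b1 k1] assms by (simp add: Qf_def)

lemma case_main:
  assumes "k1 \<noteq> k2" "b2 - b1 - k1*(a2-a1) \<noteq> 0"
    and sub: "sigma (a1,b1,k1) \<inter> sigma (a2,b2,k2) \<subseteq> sigma (a,b,k)"
  shows "(a,b,k) = (a1,b1,k1) \<or> (a,b,k) = (a2,b2,k2)"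
proof -
  have H: "Qf (a - a1) (k1 - k) (b - b1 - k1*(a - a1)) m t = 0"
    if "m \<noteq> 0" "t \<noteq> 0" "Qf (a2 - a1) (k1 - k2) (b2 - b1 - k1*(a2 - a1)) m t = 0" "t \<noteq> -(k1 - k2)" for m t
  proof -
    have "gpt a1 b1 k1 m t \<in> sigma (a2,b2,k2)" using mem_iff[OF that(1,2)] that by auto
    moreover have "gpt a1 b1 k1 m t \<in> sigma (a1,b1,k1)" using in_sigma1 that by simp
    ultimately have "gpt a1 b1 k1 m t \<in> sigma (a,b,k)" using sub by blast
    then show ?thesis using mem_iff[OF that(1,2)] by auto
  qed
  have dk: "k1 - k2 \<noteq> 0" using assms by simp
  have r: "(a - a1 = 0 \<and> k1 - k = 0 \<and> b - b1 - k1*(a - a1) = 0) \<or>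
     (a - a1 = a2 - a1 \<and> k1 - k = k1 - k2 \<and> b - b1 - k1*(a - a1) = b2 - b1 - k1*(a2 - a1))"
    by (rule main_abs[OF dk assms(2)]) (rule H; assumption)
  then show ?thesis
  proof
    assume h: "a - a1 = 0 \<and> k1 - k = 0 \<and> b - b1 - k1*(a - a1) = 0"
    then have "a = a1" "k = k1" by auto
    then have "b = b1" using h by auto
    then show ?thesis using \<open>a = a1\<close> \<open>k = k1\<close> by simp
  next
    assume h: "a - a1 = a2 - a1 \<and> k1 - k = k1 - k2 \<and> b - b1 - k1*(a - a1) = b2 - b1 - k1*(a2 - a1)"
    then have "a = a2" "k = k2" by auto
    then have "b = b2" using h by auto
    then show ?thesis using \<open>a = a2\<close> \<open>k = k2\<close> by simp
  qed
qed

lemma case_par: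
  assumes "k1 = k2" "b2 - b1 - k1*(a2-a1) \<noteq> 0"
    and sub: "sigma (a1,b1,k1) \<inter> sigma (a2,b2,k2) \<subseteq> sigma (a,b,k)"
  shows "(a,b,k) = (a1,b1,k1) \<or> (a,b,k) = (a2,b2,k2)"
proof -
  have H: "Qf (a - a1) (k1 - k) (b - b1 - k1*(a - a1)) m t = 0"
    if "m \<noteq> 0" "t \<noteq> 0" "Qf (a2 - a1) 0 (b2 - b1 - k1*(a2 - a1)) m t = 0" for m t
  proof -
    have "gpt a1 b1 k1 m t \<in> sigma (a2,b2,k2)" using mem_iff[OF that(1,2)] that assms(1) by auto
    moreover have "gpt a1 b1 k1 m t \<in> sigma (a1,b1,k1)" using in_sigma1 that by simp
    ultimately have "gpt a1 b1 k1 m t \<in> sigma (a,b,k)" using sub by blast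
    then show ?thesis using mem_iff[OF that(1,2)] by auto
  qed
  have r: "(a - a1 = 0 \<and> k1 - k = 0 \<and> b - b1 - k1*(a - a1) = 0) \<or>
     (a - a1 = a2 - a1 \<and> k1 - k = 0 \<and> b - b1 - k1*(a - a1) = b2 - b1 - k1*(a2 - a1))"
    by (rule par_abs[OF assms(2)]) (rule H; assumption)
  then show ?thesis
  proof
    assume h: "a - a1 = 0 \<and> k1 - k = 0 \<and> b - b1 - k1*(a - a1) = 0"
    then have "a = a1" "k = k1" by auto
    then have "b = b1" using h by auto
    then show ?thesis using \<open>a = a1\<close> \<open>k = k1\<close> by simp
  next
    assume h: "a - a1 = a2 - a1 \<and> k1 - k = 0 \<and> b - b1 - k1*(a - a1) = b2 - b1 - k1*(a2 - a1)"
    then have "a = a2" "k = k2" using assms(1) by auto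
    then have "b = b2" using h by auto
    then show ?thesis using \<open>a = a2\<close> \<open>k = k2\<close> by simp
  qed
qed

lemma empty_pt:
  assumes "k1 \<noteq> k2" "(x,y,w) \<in> sigma (a1,b1,k1)" "(x,y,w) \<in> sigma (a1,b1,k2)"
  shows False
proof -
  define u where "u = x - a1"
  define v where "v = y - b1"
  have e1: "(v - k1*u)*(v - w*u) = 2*(w-k1)" and e2: "(v - k2*u)*(v - w*u) = 2*(w-k2)"
    using assms(2,3) unfolding sigma_def u_def v_def by auto
  have "(k2 - k1)*(u*(v - w*u) - 2) = 0" using e1 e2 by algebra
  then have uv: "u*(v - w*u) = 2" using assms(1) by simp
  have "(v - w*u)^2 = 0" using e1 uv by algebra
  then have "v - w*u = 0" by simp
  then show False using uv by simp
qed

lemma empty_line: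
  assumes "a1 \<noteq> a2" "b2 = b1 + k*(a2 - a1)" "(x,y,w) \<in> sigma (a1,b1,k)" "(x,y,w) \<in> sigma (a2,b2,k)"
  shows False
proof -
  define T where "T = y - b1 - k*(x - a1)"
  have wk: "w \<noteq> k" using assms(3) unfolding sigma_def by auto
  have r1: "(y - b1 - k*(x-a1))*(y - b1 - w*(x-a1)) = 2*(w-k)" using assms(3) unfolding sigma_def by auto
  have r2: "(y - b2 - k*(x-a2))*(y - b2 - w*(x-a2)) = 2*(w-k)" using assms(4) unfolding sigma_def by auto
  have e1: "T*(T + (k-w)*(x-a1)) = 2*(w-k)" using r1 unfolding T_def by algebra
  have e2: "T*(T + (k-w)*(x-a2)) = 2*(w-k)" using r2 assms(2) unfolding T_def by algebra
  have "T*(k-w)*(a2-a1) = 0" using e1 e2 by algebra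
  then have "T = 0" using wk assms(1) by simp
  then show False using e1 wk by simp
qed

theorem lemma1:
  fixes q1 q2 q :: "real \<times> real \<times> real"
  assumes "q1 \<noteq> q2"
    and "sigma q1 \<inter> sigma q2 \<noteq> {}"
    and "sigma q1 \<inter> sigma q2 \<subseteq> sigma q"
  shows "q = q1 \<or> q = q2"
proof -
  obtain a1 b1 k1 where q1: "q1 = (a1,b1,k1)" by (cases q1) auto
  obtain a2 b2 k2 where q2: "q2 = (a2,b2,k2)" by (cases q2) auto
  obtain a b k where q: "q = (a,b,k)" by (cases q) auto
  obtain x y w where g: "(x,y,w) \<in> sigma q1" "(x,y,w) \<in> sigma q2" using assms(2) by auto
  have sub: "sigma (a1,b1,k1) \<inter> sigma (a2,b2,k2) \<subseteq> sigma (a,b,k)" using assms(3) q1 q2 q by simp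
  have sub': "sigma (a2,b2,k2) \<inter> sigma (a1,b1,k1) \<subseteq> sigma (a,b,k)" using sub by blast
  show ?thesis
  proof (cases "k1 = k2")
    case True
    show ?thesis
    proof (cases "b2 - b1 - k1*(a2-a1) = 0")
      case z: True
      have "a1 \<noteq> a2"
      proof
        assume "a1 = a2"
        then have "b1 = b2" using z by simp
        then show False using assms(1) q1 q2 True \<open>a1 = a2\<close> by simp
      qed
      moreover have "b2 = b1 + k1*(a2-a1)" using z by simp
      ultimately show ?thesis using empty_line[of a1 a2 b2 b1 k1 x y w] g q1 q2 True by simp
    next
      case False
      from case_par[OF True False sub] show ?thesis using q1 q2 q by auto
    qed
  next
    case ne: False
    show ?thesis
    proof (cases "b2 - b1 - k1*(a2-a1) = 0")
      case False
      from case_main[OF ne False sub] show ?thesis using q1 q2 q by auto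
    next
      case z1: True
      show ?thesis
      proof (cases "b1 - b2 - k2*(a1-a2) = 0")
        case False
        from case_main[OF _ False sub'] ne show ?thesis using q1 q2 q by auto
      next
        case z2: True
        have "(k1 - k2)*(a2 - a1) = 0" using z1 z2 by algebra
        then have "a1 = a2" using ne by simp
        then have "b1 = b2" using z1 by simp
        then show ?thesis using empty_pt[OF ne, of x y w a1 b1] g q1 q2 \<open>a1 = a2\<close> by simp
      qed
    qed
  qed
qed


end
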